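(* Let $K$ be a field of characteristic $\neq2$ with involution $a\mapsto\bar a$, and let $\Phi$ be an $n\times n$ Frobenius block with characteristic polynomial $\chi(x)=p(x)^s=x^n+\alpha_1x^{n-1}+\dots+\alpha_n$, $p$ monic irreducible. A nonsingular matrix $X$ with $X=X^*\Phi$ exists if and only if (A1) $\chi(x)=\chi^\vee(x)$, and (A2) $p(x)\neq x+(-1)^{n-1}$ in the case of the identity involution. When these hold, one can take $X=[a_{j-i}]_{i,j=1}^n$, where $a_{1-n},\dots,a_{n-1}$ are terms of the $\chi$-recurrent sequence determined by the fragment $(a_{-m},\dots,a_{m-1})=(\bar a,0,\dots,0,a)$ of length $2m\in\{n,n+1\}$, in which: (a) $a=1$ if $n=2m$, except when $p(x)=x+\alpha$ with $\alpha^{n-1}=-1$; (b) $a=k$ if $n=2m$, $p(x)=x+\alpha$, $\alpha^{n-1}=-1$, and also if $n=2m-1$, $p(x)=x+1$; (c) $a=\chi(-1)$ if $n=2m-1$, $p(x)\ne x+1$.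
   Context: $M^*=[\bar m_{ji}]$ for $M=[m_{ij}]$. For $f=a_0x^n+\dots+a_n$ with $a_n\ne0$, $f^\vee(x)=\bar a_n^{-1}(\bar a_nx^n+\dots+\bar a_1x+\bar a_0)$. A Frobenius block is an $n\times n$ matrix with ones on the subdiagonal, last column $(-c_n,\dots,-c_1)^T$, zeros elsewhere, and characteristic polynomial $x^n+c_1x^{n-1}+\dots+c_n$ a power of an irreducible polynomial. For $f(x)=\gamma_0x^m+\dots+\gamma_m$, a sequence $(a_q,\dots,a_r)$ is $f$-recurrent if $\gamma_0a_{l+m}+\gamma_1a_{l+m-1}+\dots+\gamma_ma_l=0$ for $q\le l\le r-m$. In the case of a nonidentity involution, $k$ denotes a fixed element with $k=-\bar k\ne0$. *)

theory Defs
  imports "Jordan_Normal_Form.Matrix" "HOL-Computational_Algebra.Polynomial"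
begin

definition involution :: "('a::field \<Rightarrow> 'a) \<Rightarrow> bool" where
  "involution cj \<longleftrightarrow> (\<forall>a b. cj (a + b) = cj a + cj b) \<and> (\<forall>a b. cj (a * b) = cj a * cj b)
     \<and> (\<forall>a. cj (cj a) = a)"

definition mat_star :: "('a \<Rightarrow> 'a) \<Rightarrow> 'a mat \<Rightarrow> 'a mat" where
  "mat_star cj M = transpose_mat (map_mat cj M)"

text \<open>f^\<or>: for f = a0 x^n + ... + an (an \<noteq> 0),
  f^\<or>(x) = conj(an)^{-1} (conj(an) x^n + ... + conj(a1) x + conj(a0)).
  In terms of Isabelle coefficients (coeff f i = coefficient of x^i), the coefficient of x^i
  of f^\<or> is conj(coeff f (n-i)) / conj(coeff f 0).\<close>
definition poly_vee :: "('a::field \<Rightarrow> 'a) \<Rightarrow> 'a poly \<Rightarrow> 'a poly" where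
  "poly_vee cj f = smult (inverse (cj (coeff f 0))) (map_poly cj (reflect_poly f))"

text \<open>Frobenius (companion) block of a monic polynomial f = x^n + c1 x^{n-1} + ... + cn:
  ones on the subdiagonal, last column (-cn, ..., -c1)^T (0-indexed row i holds -coeff f i).\<close>
definition frobenius_block :: "'a::comm_ring_1 poly \<Rightarrow> 'a mat" where
  "frobenius_block f = mat (degree f) (degree f)
     (\<lambda>(i, j). if j = degree f - 1 then - coeff f i else if i = j + 1 then 1 else 0)"

text \<open>f-recurrence of (a_q, ..., a_r) for f = g0 x^m + ... + gm:
  g0 a_{l+m} + ... + gm a_l = 0 for q \<le> l \<le> r - m.  Note g_j = coeff f (m - j).\<close>
definition recurrent :: "'a::comm_ring_1 poly \<Rightarrow> int \<Rightarrow> int \<Rightarrow> (int \<Rightarrow> 'a) \<Rightarrow> bool" where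
  "recurrent f q r a \<longleftrightarrow>
     (\<forall>l. q \<le> l \<and> l \<le> r - int (degree f) \<longrightarrow>
        (\<Sum>i\<le>degree f. coeff f i * a (l + int i)) = 0)"

definition toeplitz_mat :: "nat \<Rightarrow> (int \<Rightarrow> 'a) \<Rightarrow> 'a mat" where
  "toeplitz_mat n a = mat n n (\<lambda>(i, j). a (int j - int i))"

text \<open>The parameter a of the initial fragment, chosen by cases (a),(b),(c);
  k is the fixed element with k = - conj k \<noteq> 0 (nonidentity involution).\<close>
definition frag_param :: "'a::field poly \<Rightarrow> 'a poly \<Rightarrow> nat \<Rightarrow> 'a \<Rightarrow> 'a" where
  "frag_param chi p n k =
     (if even n then
        (if degree p = 1 \<and> coeff p 0 ^ (n - 1) = -1 then k else 1)
      else
        (if p = [:1, 1:] then k else poly chi (-1)))"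

definition has_fragment :: "('a::zero \<Rightarrow> 'a) \<Rightarrow> nat \<Rightarrow> 'a \<Rightarrow> (int \<Rightarrow> 'a) \<Rightarrow> bool" where
  "has_fragment cj m a0 a \<longleftrightarrow>
     a (- int m) = cj a0 \<and> a (int m - 1) = a0 \<and> (\<forall>j. - int m < j \<and> j < int m - 1 \<longrightarrow> a j = 0)"

end

theory Submission
  imports Defs "HOL-Computational_Algebra.Polynomial_Factorial" "Jordan_Normal_Form.Determinant"
begin

definition ap :: "'a::comm_ring_1 poly \<Rightarrow> (int \<Rightarrow> 'a) \<Rightarrow> int \<Rightarrow> 'a" where
  "ap F b l = (\<Sum>i\<le>degree F. coeff F i * b (l + int i))"

lemma ap_bound: "degree F \<le> N \<Longrightarrow> ap F b l = (\<Sum>i\<le>N. coeff F i * b (l + int i))"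
  unfolding ap_def
  by (rule sum.mono_neutral_left) (auto simp: coeff_eq_0)

lemma ap_pCons: "ap (pCons c F) b l = c * b l + ap F b (l + 1)"
proof -
  have "ap (pCons c F) b l = (\<Sum>i\<le>Suc (degree F). coeff (pCons c F) i * b (l + int i))"
    by (rule ap_bound) (simp add: degree_pCons_le)
  also have "\<dots> = c * b l + (\<Sum>i\<le>degree F. coeff F i * b (l + 1 + int i))"
    by (subst sum.atMost_Suc_shift) (simp add: add_ac)
  finally show ?thesis by (simp add: ap_def)
qed

lemma ap_zero_poly[simp]: "ap 0 b l = 0"
  by (simp add: ap_def)

lemma ap_add: "ap (F + G) b l = ap F b l + ap G b l"
proof -
  let ?N = "max (degree F) (degree G)"
  have "ap (F + G) b l = (\<Sum>i\<le>?N. coeff (F+G) i * b (l + int i))"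
    by (rule ap_bound) (simp add: degree_add_le)
  also have "\<dots> = (\<Sum>i\<le>?N. coeff F i * b (l + int i)) + (\<Sum>i\<le>?N. coeff G i * b (l + int i))"
    by (simp add: distrib_right sum.distrib)
  also have "\<dots> = ap F b l + ap G b l"
    by (simp add: ap_bound[symmetric])
  finally show ?thesis .
qed

lemma ap_smult: "ap (smult c F) b l = c * ap F b l"
proof -
  have "ap (smult c F) b l = (\<Sum>i\<le>degree F. coeff (smult c F) i * b (l + int i))"
    by (rule ap_bound) (simp add: degree_smult_le)
  then show ?thesis by (simp add: ap_def sum_distrib_left mult.assoc)
qed

lemma ap_minus: "ap (- F) b l = - ap F b l"
  using ap_smult[of "-1" F b l] by simp

lemma ap_diff: "ap (F - G) b l = ap F b l - ap G b l"
  using ap_add[of F "-G" b l] ap_minus[of G b l] by simp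

lemma ap_mult: "ap (F * G) b l = ap F (ap G b) l"
proof (induction F arbitrary: l rule: pCons_induct)
  case 0
  then show ?case by (simp add: ap_def)
next
  case (pCons c F)
  have "pCons c F * G = smult c G + pCons 0 (F * G)" by (simp add: mult_pCons_left)
  then show ?case using pCons by (simp add: ap_add ap_smult ap_pCons)
qed

lemma ap_cong: "(\<And>i. i \<le> degree F \<Longrightarrow> b (l + int i) = b' (l + int i)) \<Longrightarrow> ap F b l = ap F b' l"
  unfolding ap_def by (rule sum.cong) auto

lemma ap_zero_seq: "ap F (\<lambda>_. 0) l = 0"
  by (simp add: ap_def)

lemma ap_seq_diff: "ap F (\<lambda>j. u j - v j) l = ap F u l - ap F v l"
  by (simp add: ap_def algebra_simps sum_subtractf)

definition rec :: "'a::comm_ring_1 poly \<Rightarrow> (int \<Rightarrow> 'a) \<Rightarrow> bool" where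
  "rec F b \<longleftrightarrow> (\<forall>l. ap F b l = 0)"

lemma rec_ap: assumes "rec C b" shows "rec C (ap F b)"
  unfolding rec_def
proof
  fix l
  have "ap C (ap F b) l = ap (F * C) b l" by (simp add: ap_mult mult.commute)
  also have "\<dots> = ap F (ap C b) l" by (simp add: ap_mult)
  also have "ap C b = (\<lambda>_. 0)" using assms by (auto simp: rec_def)
  finally show "ap C (ap F b) l = 0" by (simp add: ap_zero_seq)
qed

lemma sum_atMost_last: "(\<Sum>i\<le>(n::nat). f i) = (\<Sum>i<n. f i) + (f n :: 'a::comm_monoid_add)"
  using sum.lessThan_Suc[of f n] by (simp add: lessThan_Suc_atMost)

lemma ap_monic: "coeff F (degree F) = 1 \<Longrightarrow>
   ap F b l = (\<Sum>i<degree F. coeff F i * b (l + int i)) + b (l + int (degree F))"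
  by (simp add: ap_def sum_atMost_last)

lemma ap_first: "ap F b l = coeff F 0 * b l + (\<Sum>i\<in>{1..degree F}. coeff F i * b (l + int i))"
proof -
  have "{..degree F} = insert 0 {1..degree F}" by auto
  then show ?thesis by (simp add: ap_def)
qed

lemma uniq_fwd:
  assumes monic: "coeff C (degree C) = 1"
    and r: "\<And>l. Q \<le> l \<Longrightarrow> l + int (degree C) \<le> R \<Longrightarrow> ap C u l = 0"
    and z: "\<And>j. Q \<le> j \<Longrightarrow> j < Q + int (degree C) \<Longrightarrow> u j = 0"
  shows "\<forall>j. Q \<le> j \<and> j < Q + int k \<and> j \<le> R \<longrightarrow> u j = 0"
proof (induction k)
  case 0 then show ?case by auto
next
  case (Suc k)
  show ?case
  proof (intro allI impI)
    fix j assume j: "Q \<le> j \<and> j < Q + int (Suc k) \<and> j \<le> R"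
    show "u j = 0"
    proof (cases "j < Q + int k")
      case True then show ?thesis using Suc j by auto
    next
      case False
      then have jk: "j = Q + int k" using j by auto
      show ?thesis
      proof (cases "j < Q + int (degree C)")
        case True then show ?thesis using z j by auto
      next
        case False
        define l where "l = j - int (degree C)"
        have "ap C u l = 0" using r[of l] False j by (auto simp: l_def)
        moreover have "(\<Sum>i<degree C. coeff C i * u (l + int i)) = 0"
        proof (intro sum.neutral ballI)
          fix i assume "i \<in> {..<degree C}"
          then have "Q \<le> l + int i \<and> l + int i < Q + int k \<and> l + int i \<le> R"
            using False jk j by (auto simp: l_def)
          then show "coeff C i * u (l + int i) = 0" using Suc.IH by simp
        qed
        ultimately show ?thesis using ap_monic[OF monic, of u l] by (simp add: l_def)
      qed
    qed
  qed
qed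

lemma uniq_window:
  assumes monic: "coeff C (degree C) = 1"
    and r: "\<And>l. Q \<le> l \<Longrightarrow> l + int (degree C) \<le> R \<Longrightarrow> ap C u l = 0"
    and z: "\<And>j. Q \<le> j \<Longrightarrow> j < Q + int (degree C) \<Longrightarrow> u j = 0"
    and j: "Q \<le> j" "j \<le> R"
  shows "u j = 0"
  using uniq_fwd[OF monic r z, where k="nat (j - Q + 1)"] j by auto

lemma uniq_bwd:
  fixes C :: "'a::idom poly"
  assumes c0: "coeff C 0 \<noteq> 0"
    and r: "rec C u"
    and z: "\<And>j. c \<le> j \<Longrightarrow> j < c + int (degree C) \<Longrightarrow> u j = 0"
  shows "\<forall>j. c - int k \<le> j \<and> j < c + int (degree C) \<longrightarrow> u j = 0"
proof (induction k)
  case 0 then show ?case using z by auto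
next
  case (Suc k)
  show ?case
  proof (intro allI impI)
    fix j assume j: "c - int (Suc k) \<le> j \<and> j < c + int (degree C)"
    show "u j = 0"
    proof (cases "c - int k \<le> j")
      case True then show ?thesis using Suc j by auto
    next
      case False
      then have jk: "j = c - int k - 1" using j by auto
      have "ap C u j = 0" using r by (auto simp: rec_def)
      moreover have "(\<Sum>i\<in>{1..degree C}. coeff C i * u (j + int i)) = 0"
        using Suc jk by (intro sum.neutral) auto
      ultimately show ?thesis using ap_first[of C u j] c0 by auto
    qed
  qed
qed

lemma uniq:
  fixes C :: "'a::idom poly"
  assumes monic: "coeff C (degree C) = 1" and c0: "coeff C 0 \<noteq> 0"
    and r: "rec C u"
    and z: "\<And>j. c \<le> j \<Longrightarrow> j < c + int (degree C) \<Longrightarrow> u j = 0"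
  shows "u j = 0"
proof (cases "c \<le> j")
  case True
  have r': "\<And>l. c \<le> l \<Longrightarrow> l + int (degree C) \<le> j \<Longrightarrow> ap C u l = 0" using r by (auto simp: rec_def)
  show ?thesis by (rule uniq_window[OF monic r' z]) (use True in auto)
next
  case False
  then show ?thesis using uniq_bwd[OF c0 r z, where k="nat (c - j)"] by auto
qed

function bld :: "'a::field poly \<Rightarrow> int \<Rightarrow> (int \<Rightarrow> 'a) \<Rightarrow> int \<Rightarrow> 'a" where
  "bld C Q w j = (if Q \<le> j \<and> j < Q + int (degree C) then w j
     else if Q + int (degree C) \<le> j then
       - (\<Sum>i<degree C. coeff C i * bld C Q w (j - int (degree C) + int i))
     else - inverse (coeff C 0) * (\<Sum>i\<in>{1..degree C}. coeff C i * bld C Q w (j + int i)))"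
  by auto
termination
  by (relation "measure (\<lambda>(C,Q,w,j). if Q \<le> j \<and> j < Q + int (degree C) then 0 else 1 + nat \<bar>j - Q\<bar>)") auto

declare bld.simps[simp del]

lemma bld_rec:
  assumes monic: "coeff C (degree C) = 1" and c0: "coeff C 0 \<noteq> 0"
  shows "rec C (bld C Q w)"
  unfolding rec_def
proof
  fix l
  show "ap C (bld C Q w) l = 0"
  proof (cases "Q \<le> l")
    case True
    then have "bld C Q w (l + int (degree C)) = - (\<Sum>i<degree C. coeff C i * bld C Q w (l + int i))"
      by (subst bld.simps) simp
    then show ?thesis by (simp add: ap_monic[OF monic])
  next
    case False
    then have "bld C Q w l = - inverse (coeff C 0) * (\<Sum>i\<in>{1..degree C}. coeff C i * bld C Q w (l + int i))"
      by (subst bld.simps) simp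
    then show ?thesis using c0 by (simp add: ap_first)
  qed
qed

lemma bld_init: "Q \<le> j \<Longrightarrow> j < Q + int (degree C) \<Longrightarrow> bld C Q w j = w j"
  by (subst bld.simps) simp

lemma build:
  fixes C :: "'a::field poly"
  assumes monic: "coeff C (degree C) = 1" and c0: "coeff C 0 \<noteq> 0"
  shows "\<exists>b. rec C b \<and> (\<forall>j. Q \<le> j \<and> j < Q + int (degree C) \<longrightarrow> b j = w j)"
  using bld_rec[OF assms] bld_init by blast

lemma extend:
  fixes C :: "'a::field poly"
  assumes monic: "coeff C (degree C) = 1" and c0: "coeff C 0 \<noteq> 0"
    and r: "\<And>l. Q \<le> l \<Longrightarrow> l + int (degree C) \<le> R \<Longrightarrow> ap C a l = 0"
    and len: "Q + int (degree C) \<le> R + 1"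
  shows "\<exists>b. rec C b \<and> (\<forall>j. Q \<le> j \<and> j \<le> R \<longrightarrow> b j = a j)"
proof -
  obtain b where b: "rec C b" "\<forall>j. Q \<le> j \<and> j < Q + int (degree C) \<longrightarrow> b j = a j"
    using build[OF monic c0] by blast
  have "(\<lambda>j. b j - a j) j = 0" if "Q \<le> j" "j \<le> R" for j
  proof (rule uniq_window[OF monic _ _ that])
    fix l assume "Q \<le> l" "l + int (degree C) \<le> R"
    then show "ap C (\<lambda>j. b j - a j) l = 0" using b(1) r by (simp add: ap_seq_diff rec_def)
  next
    fix j assume "Q \<le> j" "j < Q + int (degree C)"
    then show "b j - a j = 0" using b(2) by simp
  qed
  then show ?thesis using b by auto
qed

lemma invertible_iff_ker:
  fixes A :: "'a::field mat"
  assumes A: "A \<in> carrier_mat n n"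
  shows "invertible_mat A \<longleftrightarrow> (\<forall>v \<in> carrier_vec n. A *\<^sub>v v = 0\<^sub>v n \<longrightarrow> v = 0\<^sub>v n)"
proof
  assume "invertible_mat A"
  then obtain B where AB: "A * B = 1\<^sub>m (dim_row A)" and BA: "B * A = 1\<^sub>m (dim_row B)"
    unfolding invertible_mat_def inverts_mat_def by auto
  have Bc: "B \<in> carrier_mat n n"
  proof -
    have "dim_col B = dim_col (A * B)" by simp
    also have "\<dots> = n" using AB A by simp
    finally have 1: "dim_col B = n" .
    have "dim_row B = dim_col (1\<^sub>m (dim_row B) :: 'a mat)" by simp
    also have "\<dots> = dim_col (B * A)" using BA by simp
    also have "\<dots> = n" using A by simp
    finally have 2: "dim_row B = n" .
    note 1 2
    then show ?thesis by auto
  qed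
  show "\<forall>v \<in> carrier_vec n. A *\<^sub>v v = 0\<^sub>v n \<longrightarrow> v = 0\<^sub>v n"
  proof (intro ballI impI)
    fix v :: "'a vec" assume v: "v \<in> carrier_vec n" and Av: "A *\<^sub>v v = 0\<^sub>v n"
    have "v = (B * A) *\<^sub>v v" using BA Bc v by auto
    also have "\<dots> = B *\<^sub>v (A *\<^sub>v v)" using A Bc v by (simp add: assoc_mult_mat_vec)
    also have "\<dots> = 0\<^sub>v n" using Av Bc by auto
    finally show "v = 0\<^sub>v n" .
  qed
next
  assume k: "\<forall>v \<in> carrier_vec n. A *\<^sub>v v = 0\<^sub>v n \<longrightarrow> v = 0\<^sub>v n"
  have "det A \<noteq> 0" using det_0_iff_vec_prod_zero_field[OF A] k by auto
  from det_non_zero_imp_unit[OF A this, of "()"]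
  obtain B where B: "B \<in> carrier_mat n n" "B * A = 1\<^sub>m n" "A * B = 1\<^sub>m n"
    unfolding Units_def ring_mat_def by auto
  then show "invertible_mat A" using A
    unfolding invertible_mat_def inverts_mat_def square_mat.simps by auto
qed

lemma not_invertible:
  fixes A :: "'a::field mat"
  assumes A: "A \<in> carrier_mat n n" and v: "v \<in> carrier_vec n" "v \<noteq> 0\<^sub>v n" "A *\<^sub>v v = 0\<^sub>v n"
  shows "\<not> invertible_mat A"
  using invertible_iff_ker[OF A] v by auto

lemma toeplitz_carrier[simp]: "toeplitz_mat n a \<in> carrier_mat n n"
  by (simp add: toeplitz_mat_def)

lemma toeplitz_dim[simp]: "dim_row (toeplitz_mat n a) = n" "dim_col (toeplitz_mat n a) = n"
  by (simp_all add: toeplitz_mat_def)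

lemma toeplitz_index[simp]: "i < n \<Longrightarrow> j < n \<Longrightarrow> toeplitz_mat n a $$ (i, j) = a (int j - int i)"
  by (simp add: toeplitz_mat_def)

lemma toeplitz_mult_vec:
  assumes "degree V < n" "i < n"
  shows "(toeplitz_mat n b *\<^sub>v vec n (coeff V)) $ i = ap V b (- int i)"
proof -
  have "(toeplitz_mat n b *\<^sub>v vec n (coeff V)) $ i = (\<Sum>j<n. b (int j - int i) * coeff V j)"
    using assms by (simp add: mult_mat_vec_def scalar_prod_def row_def atLeast0LessThan)
  also have "\<dots> = (\<Sum>j\<le>n - 1. coeff V j * b (- int i + int j))"
    using assms by (intro sum.cong) (auto simp: mult.commute)
  also have "\<dots> = ap V b (- int i)"
    using assms by (intro ap_bound[symmetric]) auto
  finally show ?thesis .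
qed

lemma toeplitz_singular:
  fixes V :: "'a::field poly"
  assumes "V \<noteq> 0" "degree V < n" "\<And>i. i < n \<Longrightarrow> ap V b (- int i) = 0"
  shows "\<not> invertible_mat (toeplitz_mat n b)"
proof (rule not_invertible[OF toeplitz_carrier])
  show "vec n (coeff V) \<in> carrier_vec n" by simp
  show "vec n (coeff V) \<noteq> 0\<^sub>v n"
  proof
    assume "vec n (coeff V) = 0\<^sub>v n"
    then have "coeff V (degree V) = 0" using assms(2)
      by (metis index_vec index_zero_vec(1))
    then show False using assms(1) by simp
  qed
  show "toeplitz_mat n b *\<^sub>v vec n (coeff V) = 0\<^sub>v n"
  proof (intro eq_vecI)
    fix i assume "i < dim_vec (0\<^sub>v n :: 'a vec)"
    then have i: "i < n" by simp
    show "(toeplitz_mat n b *\<^sub>v vec n (coeff V)) $ i = 0\<^sub>v n $ i"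
      using toeplitz_mult_vec[OF assms(2) i, of b] assms(3)[OF i] i by simp
  qed simp
qed

lemma toeplitz_singular_poly:
  fixes b :: "int \<Rightarrow> 'a::field"
  assumes "\<not> invertible_mat (toeplitz_mat n b)"
  shows "\<exists>V. V \<noteq> 0 \<and> degree V < n \<and> (\<forall>i<n. ap V b (- int i) = 0)"
proof -
  obtain v where v: "v \<in> carrier_vec n" "v \<noteq> 0\<^sub>v n" "toeplitz_mat n b *\<^sub>v v = 0\<^sub>v n"
    using assms invertible_iff_ker[OF toeplitz_carrier] by auto
  define V where "V = Poly (list_of_vec v)"
  have cV: "coeff V j = (if j < n then v $ j else 0)" for j
    using v(1) by (auto simp: V_def nth_default_def)
  have n0: "n > 0"
  proof (rule ccontr)
    assume "\<not> n > 0"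
    then have "v = 0\<^sub>v n" using v(1) by (intro eq_vecI) auto
    then show False using v(2) by simp
  qed
  have dV: "degree V < n"
  proof -
    have "degree V \<le> n - 1" by (rule degree_le) (auto simp: cV)
    then show ?thesis using n0 by simp
  qed
  have V0: "V \<noteq> 0"
  proof
    assume "V = 0"
    then have "v = 0\<^sub>v n" using v(1) cV by (intro eq_vecI) (auto, metis coeff_0)
    then show False using v(2) by simp
  qed
  have vv: "vec n (coeff V) = v" using v(1) cV by (intro eq_vecI) auto
  have "ap V b (- int i) = 0" if "i < n" for i
    using toeplitz_mult_vec[OF dV that, of b] v(3) vv that by simp
  then show ?thesis using V0 dV by blast
qed

lemma prime_not_dvd_unit:
  fixes p h :: "'a::field poly"
  assumes pr: "prime_elem p" and nd: "\<not> p dvd h"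
  shows "h dvd p ^ k \<Longrightarrow> is_unit h"
proof (induction k)
  case 0 then show ?case by simp
next
  case (Suc k)
  then obtain c where c: "p ^ Suc k = h * c" by (elim dvdE)
  have "p dvd p ^ Suc k" by simp
  then have "p dvd h * c" unfolding c .
  then have "p dvd c" using prime_elem_dvd_multD[OF pr] nd by blast
  then obtain c' where c': "c = p * c'" by (elim dvdE)
  have p0: "p \<noteq> 0" using pr by auto
  have "p * p ^ k = p * (h * c')" using c c' by (simp add: ac_simps)
  then have "p ^ k = h * c'" using mult_left_cancel[OF p0] by blast
  then have "h dvd p ^ k" by simp
  then show ?case by (rule Suc.IH)
qed

lemma dvd_prime_power_lower:
  fixes p h :: "'a::field poly"
  assumes pr: "prime_elem p"
  shows "h dvd p ^ s \<Longrightarrow> \<not> p ^ s dvd h \<Longrightarrow> h dvd p ^ (s - 1)"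
proof (induction s arbitrary: h)
  case 0 then show ?case by simp
next
  case (Suc s)
  show ?case
  proof (cases "p dvd h")
    case True
    then obtain h' where h': "h = p * h'" by (auto elim: dvdE)
    have p0: "p \<noteq> 0" using pr by auto
    have "p * h' dvd p * p ^ s" using Suc.prems(1) h' by simp
    then have "h' dvd p ^ s" using dvd_mult_cancel_left p0 by blast
    moreover have "\<not> p ^ s dvd h'"
    proof
      assume "p ^ s dvd h'"
      then have "p * p ^ s dvd p * h'" by (rule mult_dvd_mono[OF dvd_refl])
      then show False using Suc.prems(2) h' by simp
    qed
    ultimately have "h' dvd p ^ (s - 1)" using Suc.IH by blast
    moreover have "s \<noteq> 0" using \<open>\<not> p ^ s dvd h'\<close> by (cases s) auto
    then have e: "p ^ (Suc s - 1) = p * p ^ (s - 1)" by (cases s) auto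
    have "p * h' dvd p * p ^ (s - 1)" using \<open>h' dvd p ^ (s - 1)\<close> by (rule mult_dvd_mono[OF dvd_refl])
    then show ?thesis using h' e by simp
  next
    case False
    then have "is_unit h" using prime_not_dvd_unit[OF pr] Suc.prems(1) by blast
    then show ?thesis by auto
  qed
qed

lemma inv_crit:
  fixes p :: "'a::field poly"
  assumes irr: "irreducible p" and pm: "lead_coeff p = 1" and chi: "C = p ^ s"
    and c0: "coeff C 0 \<noteq> 0" and r: "rec C b" and nz: "ap (p ^ (s - 1)) b l \<noteq> 0"
  shows "invertible_mat (toeplitz_mat (degree C) b)"
proof (rule ccontr)
  let ?n = "degree C"
  assume "\<not> invertible_mat (toeplitz_mat ?n b)"
  then obtain V where V: "V \<noteq> 0" "degree V < ?n" "\<And>i. i < ?n \<Longrightarrow> ap V b (- int i) = 0"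
    using toeplitz_singular_poly by blast
  have monic: "coeff C (degree C) = 1" using pm chi by (simp add: lead_coeff_power)
  have W0: "ap V b j = 0" for j
  proof (rule uniq[OF monic c0 rec_ap[OF r], of "1 - int ?n"])
    fix j assume "1 - int ?n \<le> j" "j < 1 - int ?n + int ?n"
    then show "ap V b j = 0" using V(3)[of "nat (- j)"] by auto
  qed
  define I where "I = {F. F \<noteq> 0 \<and> (\<forall>j. ap F b j = 0)}"
  have VI: "V \<in> I" using V(1) W0 by (simp add: I_def)
  obtain h where h: "h \<in> I" "\<And>F. F \<in> I \<Longrightarrow> degree h \<le> degree F"
    using ex_has_least_nat[of "\<lambda>F. F \<in> I" V degree] VI by blast
  have hdvd: "h dvd F" if F: "\<forall>j. ap F b j = 0" for F
  proof (rule ccontr)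
    assume nd: "\<not> h dvd F"
    have h0: "h \<noteq> 0" using h(1) by (simp add: I_def)
    have "F mod h \<noteq> 0" using nd by (simp add: mod_eq_0_iff_dvd)
    moreover have "ap (F mod h) b j = 0" for j
    proof -
      have "F mod h = F - F div h * h" by (simp add: minus_div_mult_eq_mod)
      then have "ap (F mod h) b j = ap F b j - ap (F div h) (ap h b) j" by (simp add: ap_diff ap_mult)
      also have "ap h b = (\<lambda>_. 0)" using h(1) by (auto simp: I_def)
      finally show ?thesis using F by (simp add: ap_zero_seq)
    qed
    ultimately have "F mod h \<in> I" by (simp add: I_def)
    then have "degree h \<le> degree (F mod h)" using h(2) by blast
    moreover have "degree (F mod h) < degree h"
      using degree_mod_less[OF h0, of F] \<open>F mod h \<noteq> 0\<close> by auto
    ultimately show False by simp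
  qed
  have pr: "prime_elem p" using irr by (rule field_poly_irreducible_imp_prime)
  have "h dvd p ^ s" using hdvd r chi by (auto simp: rec_def)
  moreover have "\<not> p ^ s dvd h"
  proof
    assume "p ^ s dvd h"
    moreover have "h \<noteq> 0" using h(1) by (simp add: I_def)
    ultimately have "degree (p ^ s) \<le> degree h" by (rule dvd_imp_degree_le)
    also have "degree h \<le> degree V" using h(2) VI by blast
    finally show False using V(2) chi by simp
  qed
  ultimately have "h dvd p ^ (s - 1)" by (rule dvd_prime_power_lower[OF pr])
  then obtain w where w: "p ^ (s - 1) = h * w" by blast
  have "ap (p ^ (s - 1)) b l = ap (w * h) b l" using w by (simp add: mult.commute)
  also have "\<dots> = ap w (ap h b) l" by (rule ap_mult)
  also have "ap h b = (\<lambda>_. 0)" using h(1) by (auto simp: I_def)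
  finally show False using nz by (simp add: ap_zero_seq)
qed

lemma cj_add: "involution cj \<Longrightarrow> cj (a + b) = cj a + cj b" by (simp add: involution_def)
lemma cj_mult: "involution cj \<Longrightarrow> cj (a * b) = cj a * cj b" by (simp add: involution_def)
lemma cj_cj: "involution cj \<Longrightarrow> cj (cj a) = a" by (simp add: involution_def)
lemma cj_0: "involution cj \<Longrightarrow> cj 0 = 0"
  using cj_add[of cj 0 0] by (metis add_cancel_right_right add_0)
lemma cj_neg: "involution cj \<Longrightarrow> cj (- a) = - cj a"
  using cj_add[of cj a "-a"] cj_0[of cj] by (simp add: eq_neg_iff_add_eq_0 add.commute)
lemma cj_diff: "involution cj \<Longrightarrow> cj (a - b) = cj a - cj b"
  using cj_add[of cj a "-b"] cj_neg[of cj b] by simp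
lemma cj_eq0: "involution cj \<Longrightarrow> cj a = 0 \<longleftrightarrow> a = 0"
  by (metis cj_0 cj_cj)
lemma cj_1: "involution cj \<Longrightarrow> cj 1 = (1::'a::field)"
proof -
  assume i: "involution cj"
  have "cj 1 = cj 1 * cj (1::'a)" using cj_mult[OF i, of 1 1] by simp
  moreover have "cj (1::'a) \<noteq> 0" using cj_eq0[OF i, of 1] by simp
  ultimately show ?thesis by (metis mult_cancel_left1)
qed
lemma cj_inverse: "involution cj \<Longrightarrow> cj (inverse a) = inverse (cj (a::'a::field))"
proof -
  assume i: "involution cj"
  show ?thesis
  proof (cases "a = 0")
    case True then show ?thesis by (simp add: cj_0[OF i])
  next
    case False
    then have "cj a * cj (inverse a) = 1" using cj_mult[OF i, of a "inverse a"] cj_1[OF i] by simp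
    then show ?thesis by (metis inverse_unique)
  qed
qed
lemma cj_sum: "involution cj \<Longrightarrow> cj (sum f A) = (\<Sum>x\<in>A. cj (f x))"
proof -
  assume i: "involution cj"
  show ?thesis
    by (induction A rule: infinite_finite_induct) (simp_all add: cj_0[OF i] cj_add[OF i])
qed
lemma cj_power: "involution cj \<Longrightarrow> cj (a ^ n) = cj (a::'a::field) ^ n"
  by (induction n) (simp_all add: cj_1 cj_mult)
lemma cj_minus1: "involution cj \<Longrightarrow> cj (-1) = (-1::'a::field)"
  by (simp add: cj_neg cj_1)

lemma coeff_map_cj: "involution cj \<Longrightarrow> coeff (map_poly cj f) i = cj (coeff f i)"
  by (simp add: coeff_map_poly cj_0)

lemma poly_map_cj: "involution cj \<Longrightarrow> poly (map_poly cj f) (cj x) = cj (poly f (x::'a::field))"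
proof -
  assume i: "involution cj"
  show ?thesis
    by (induction f rule: pCons_induct) (simp_all add: map_poly_pCons cj_0[OF i] cj_add[OF i] cj_mult[OF i])
qed

lemma frob_carrier[simp]: "frobenius_block C \<in> carrier_mat (degree C) (degree C)"
  by (simp add: frobenius_block_def)

lemma star_carrier[simp]: "X \<in> carrier_mat n n \<Longrightarrow> mat_star cj X \<in> carrier_mat n n"
  by (simp add: mat_star_def)

lemma star_phi_entry:
  assumes X: "X \<in> carrier_mat n n" and n: "n = degree C" and ij: "i < n" "j < n"
  shows "(mat_star cj X * frobenius_block C) $$ (i, j) =
     (if j = n - 1 then - (\<Sum>t<n. coeff C t * cj (X $$ (t, i))) else cj (X $$ (j + 1, i)))"
proof -
  have "(mat_star cj X * frobenius_block C) $$ (i, j) =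
     (\<Sum>t<n. cj (X $$ (t, i)) * (if j = n - 1 then - coeff C t else if t = j + 1 then 1 else 0))"
    using X n ij by (simp add: mat_star_def frobenius_block_def scalar_prod_def atLeast0LessThan)
  also have "\<dots> = (if j = n - 1 then - (\<Sum>t<n. coeff C t * cj (X $$ (t, i))) else cj (X $$ (j + 1, i)))"
  proof (cases "j = n - 1")
    case True then show ?thesis by (simp add: sum_negf mult.commute)
  next
    case False
    then have "j + 1 < n" using ij by simp
    then show ?thesis using False by (simp add: if_distrib[of "\<lambda>x. _ * x"] sum.delta' cong: if_cong)
  qed
  finally show ?thesis .
qed

lemma toep_solves:
  assumes inv: "involution cj" and monic: "coeff C (degree C) = 1" and n: "n = degree C"
    and r: "rec C b" and sym: "\<And>d. b d = cj (b (-1 - d))"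
  shows "toeplitz_mat n b = mat_star cj (toeplitz_mat n b) * frobenius_block C"
proof (rule eq_matI)
  show "dim_row (toeplitz_mat n b) = dim_row (mat_star cj (toeplitz_mat n b) * frobenius_block C)"
    by (simp add: mat_star_def)
  show "dim_col (toeplitz_mat n b) = dim_col (mat_star cj (toeplitz_mat n b) * frobenius_block C)"
    using n by (simp add: frobenius_block_def)
  fix i j assume "i < dim_row (mat_star cj (toeplitz_mat n b) * frobenius_block C)"
    "j < dim_col (mat_star cj (toeplitz_mat n b) * frobenius_block C)"
  then have ij: "i < n" "j < n" using n by (simp_all add: mat_star_def frobenius_block_def)
  note e = star_phi_entry[OF toeplitz_carrier n ij, of cj b]
  show "toeplitz_mat n b $$ (i, j) = (mat_star cj (toeplitz_mat n b) * frobenius_block C) $$ (i, j)"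
  proof (cases "j = n - 1")
    case False
    then have "j + 1 < n" using ij by simp
    then have "(mat_star cj (toeplitz_mat n b) * frobenius_block C) $$ (i, j) = cj (b (int i - int (j + 1)))"
      using e False ij by simp
    also have "\<dots> = b (int j - int i)"
    proof -
      have "int i - int (j + 1) = -1 - (int j - int i)" by simp
      then show ?thesis using sym[of "int j - int i"] by metis
    qed
    finally show ?thesis using ij by simp
  next
    case True
    have "(mat_star cj (toeplitz_mat n b) * frobenius_block C) $$ (i, j)
        = - (\<Sum>t<n. coeff C t * cj (b (int i - int t)))"
      using e True ij by simp
    also have "\<dots> = - (\<Sum>t<n. coeff C t * b (- int i - 1 + int t))"
    proof -
      have "cj (b (int i - int t)) = b (- int i - 1 + int t)" for t
      proof -
        have "int i - int t = -1 - (- int i - 1 + int t)" by simp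
        then show ?thesis using sym[of "- int i - 1 + int t"] by metis
      qed
      then show ?thesis by simp
    qed
    also have "\<dots> = b (- int i - 1 + int n)"
      using r n ap_monic[OF monic, of b "- int i - 1"] unfolding rec_def
      by (simp add: add.commute) (metis add.commute add_eq_0_iff)
    also have "\<dots> = toeplitz_mat n b $$ (i, j)" using True ij by (simp add: of_nat_diff algebra_simps)
    finally show ?thesis by simp
  qed
qed

lemma sol_seq:
  assumes inv: "involution cj" and X: "X \<in> carrier_mat n n" and n: "n = degree C"
    and monic: "coeff C (degree C) = 1"
    and eq: "X = mat_star cj X * frobenius_block C"
  shows "\<exists>a. X = toeplitz_mat n a \<and> (\<forall>d. - int n \<le> d \<and> d \<le> int n - 1 \<longrightarrow> a d = cj (a (-1 - d)))
             \<and> (\<forall>l. - int n \<le> l \<and> l \<le> -1 \<longrightarrow> ap C a l = 0)"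
proof -
  have E: "X $$ (i, j) = (if j = n - 1 then - (\<Sum>t<n. coeff C t * cj (X $$ (t, i))) else cj (X $$ (j + 1, i)))"
    if "i < n" "j < n" for i j
  proof -
    have "X $$ (i, j) = (mat_star cj X * frobenius_block C) $$ (i, j)"
      using arg_cong[OF eq, of "\<lambda>M. M $$ (i, j)"] .
    then show ?thesis using star_phi_entry[OF X n that, of cj] by simp
  qed
  have E1: "X $$ (i, j) = cj (X $$ (j + 1, i))" if "i < n" "j < n" "j \<noteq> n - 1" for i j
    using E[OF that(1,2)] that(3) by simp
  have E2: "X $$ (i, n - 1) = - (\<Sum>t<n. coeff C t * cj (X $$ (t, i)))" if "i < n" for i
    using E[OF that, of "n - 1"] that by simp
  have sh: "X $$ (i + 1, j + 1) = X $$ (i, j)" if "i + 1 < n" "j + 1 < n" for i j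
  proof -
    have "X $$ (i, j) = cj (X $$ (j + 1, i))" using E1[of i j] that by simp
    also have "X $$ (j + 1, i) = cj (X $$ (i + 1, j + 1))" using E1[of "j + 1" i] that by simp
    finally show ?thesis using cj_cj[OF inv] by simp
  qed
  have shk: "\<forall>i j. i + k < n \<longrightarrow> j + k < n \<longrightarrow> X $$ (i + k, j + k) = X $$ (i, j)" for k
  proof (induction k)
    case 0 then show ?case by simp
  next
    case (Suc k)
    show ?case
    proof (intro allI impI)
      fix i j assume "i + Suc k < n" "j + Suc k < n"
      then have "X $$ ((i + k) + 1, (j + k) + 1) = X $$ (i + k, j + k)" by (intro sh) auto
      then show "X $$ (i + Suc k, j + Suc k) = X $$ (i, j)" using Suc \<open>i + Suc k < n\<close> \<open>j + Suc k < n\<close> by simp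
    qed
  qed
  define a where "a d = (if 0 \<le> d then (if d < int n then X $$ (0, nat d) else 0)
      else if - int n < d then X $$ (nat (- d), 0) else cj (X $$ (0, n - 1)))" for d
  have toep: "X $$ (i, j) = a (int j - int i)" if "i < n" "j < n" for i j
  proof (cases "i \<le> j")
    case True
    have "X $$ (0 + i, (j - i) + i) = X $$ (0, j - i)" using shk[of i, rule_format, of 0 "j - i"] that True by simp
    moreover have "a (int j - int i) = X $$ (0, nat (int j - int i))" using True that unfolding a_def by simp
    moreover have "nat (int j - int i) = j - i" by simp
    ultimately show ?thesis using True by simp
  next
    case False
    have "X $$ ((i - j) + j, 0 + j) = X $$ (i - j, 0)" using shk[of j, rule_format, of "i - j" 0] that False by simp
    moreover have "a (int j - int i) = X $$ (nat (- (int j - int i)), 0)" using False that unfolding a_def by simp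
    moreover have "nat (- (int j - int i)) = i - j" by simp
    ultimately show ?thesis using False by simp
  qed
  have Xt: "X = toeplitz_mat n a"
    by (rule eq_matI) (use X toep in auto)
  have sym: "a d = cj (a (-1 - d))" if d: "- int n \<le> d" "d \<le> int n - 1" for d
  proof -
    consider "d = - int n" | "d = int n - 1" | "0 \<le> d" "d < int n - 1" | "- int n < d" "d < 0"
      using d by linarith
    then show ?thesis
    proof cases
      case 1
      then have "d \<noteq> int n - 1" using d by auto
      then have "n > 0" using d by auto
      moreover have "nat (int n - 1) = n - 1" by simp
      ultimately show ?thesis using 1 by (simp add: a_def)
    next
      case 2
      then have "n > 0" using d by auto
      moreover have "nat (int n - 1) = n - 1" by simp
      ultimately show ?thesis using 2 by (simp add: a_def cj_cj[OF inv])
    next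
      case 3
      have "X $$ (0, nat d) = cj (X $$ (nat d + 1, 0))" using E1[of 0 "nat d"] 3 by auto
      moreover have "a (-1 - d) = X $$ (nat d + 1, 0)" using 3 by (simp add: a_def nat_add_distrib)
      ultimately show ?thesis using 3 by (simp add: a_def)
    next
      case 4
      define e where "e = nat (- d)"
      have e: "1 \<le> e" "e < n" "d = - int e" using 4 by (auto simp: e_def)
      have "X $$ (e, 0) = cj (X $$ (1, e))" using E1[of e 0] e by auto
      moreover have "X $$ (0 + 1, (e - 1) + 1) = X $$ (0, e - 1)" using sh[of 0 "e - 1"] e by simp
      moreover have "nat (int e - 1) = e - 1" by simp
      moreover have "a (-1 - d) = X $$ (0, e - 1)" using e \<open>nat (int e - 1) = e - 1\<close> by (simp add: a_def)
      ultimately show ?thesis using e by (simp add: a_def)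
    qed
  qed
  have rec: "ap C a l = 0" if l: "- int n \<le> l" "l \<le> -1" for l
  proof -
    define i where "i = nat (-1 - l)"
    have i: "i < n" "l = -1 - int i" using l by (auto simp: i_def)
    have t: "X $$ (i, n - 1) = a (int (n - 1) - int i)" using toep i by simp
    have "int (n - 1) - int i = l + int n" using i by (simp add: of_nat_diff)
    then have "a (l + int n) = X $$ (i, n - 1)" using t by simp
    also have "\<dots> = - (\<Sum>t<n. coeff C t * cj (X $$ (t, i)))" using E2 i by simp
    also have "\<dots> = - (\<Sum>t<n. coeff C t * a (l + int t))"
    proof -
      have "cj (X $$ (t, i)) = a (l + int t)" if t: "t < n" for t
      proof -
        have "X $$ (t, i) = a (int i - int t)" using toep t i by simp
        moreover have "a (l + int t) = cj (a (-1 - (l + int t)))" using sym[of "l + int t"] t i by simp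
        moreover have "-1 - (l + int t) = int i - int t" using i by simp
        ultimately show ?thesis using cj_cj[OF inv] by metis
      qed
      then show ?thesis by simp
    qed
    finally show ?thesis using ap_monic[OF monic, of a l] n by simp
  qed
  show ?thesis using Xt sym rec by blast
qed

lemma sum_rev_atMost: "(\<Sum>i\<le>(n::nat). f (n - i)) = (\<Sum>i\<le>n. f i)"
  by (rule sum.reindex_bij_witness[where i="\<lambda>i. n - i" and j="\<lambda>i. n - i"]) auto

lemma toeplitz_cong:
  assumes "\<And>d. - int n < d \<Longrightarrow> d < int n \<Longrightarrow> a d = b d"
  shows "toeplitz_mat n a = toeplitz_mat n b"
  by (rule eq_matI) (use assms in auto)

lemma coeff_vee:
  assumes inv: "involution cj"
  shows "coeff (poly_vee cj C) i = inverse (cj (coeff C 0)) *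
     (if i \<le> degree C then cj (coeff C (degree C - i)) else 0)"
  by (auto simp: poly_vee_def coeff_map_cj[OF inv] coeff_reflect_poly cj_0[OF inv])

lemma vee_c0:
  assumes inv: "involution cj" and A1: "C = poly_vee cj C" and C0: "C \<noteq> 0"
  shows "coeff C 0 \<noteq> 0"
proof
  assume "coeff C 0 = 0"
  then have "poly_vee cj C = 0" by (simp add: poly_vee_def cj_0[OF inv])
  then show False using A1 C0 by simp
qed

lemma tau_rec:
  fixes C :: "'a::field poly"
  assumes inv: "involution cj" and A1: "C = poly_vee cj C" and c0: "coeff C 0 \<noteq> 0"
    and r: "rec C b"
  shows "rec C (\<lambda>d. cj (b (-1 - d)))"
  unfolding rec_def
proof
  fix l
  let ?n = "degree C"
  have "ap C (\<lambda>d. cj (b (-1 - d))) l = (\<Sum>i\<le>?n. coeff C i * cj (b (-1 - (l + int i))))"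
    by (simp add: ap_def)
  also have "\<dots> = (\<Sum>i\<le>?n. inverse (cj (coeff C 0)) * cj (coeff C (?n - i) * b (-1 - (l + int i))))"
  proof (rule sum.cong[OF refl])
    fix i assume "i \<in> {..?n}"
    then have "coeff C i = inverse (cj (coeff C 0)) * cj (coeff C (?n - i))"
      using coeff_vee[OF inv, of C i] A1 by simp
    then show "coeff C i * cj (b (-1 - (l + int i))) =
        inverse (cj (coeff C 0)) * cj (coeff C (?n - i) * b (-1 - (l + int i)))"
      by (simp add: cj_mult[OF inv])
  qed
  also have "\<dots> = inverse (cj (coeff C 0)) * cj (\<Sum>i\<le>?n. coeff C (?n - i) * b (-1 - (l + int i)))"
    by (simp add: cj_sum[OF inv] sum_distrib_left)
  also have "(\<Sum>i\<le>?n. coeff C (?n - i) * b (-1 - (l + int i)))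
      = (\<Sum>i\<le>?n. coeff C (?n - i) * b ((-1 - l - int ?n) + int (?n - i)))"
    by (rule sum.cong[OF refl]) (simp add: of_nat_diff algebra_simps)
  also have "\<dots> = (\<Sum>i\<le>?n. coeff C i * b ((-1 - l - int ?n) + int i))"
    by (rule sum_rev_atMost[where f="\<lambda>i. coeff C i * b ((-1 - l - int ?n) + int i)"])
  also have "\<dots> = ap C b (-1 - l - int ?n)" by (simp add: ap_def)
  also have "\<dots> = 0" using r by (simp add: rec_def)
  finally show "ap C (\<lambda>d. cj (b (-1 - d))) l = 0" by (simp add: cj_0[OF inv])
qed

lemma antipal:
  fixes G :: "'a::field poly"
  assumes two: "(2::'a) \<noteq> 0" and hrefl: "reflect_poly G = - G"
    and sym: "\<And>i. i \<le> degree G \<Longrightarrow> b (l + int i) = b (l + int (degree G - i))"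
  shows "ap G b l = 0"
proof -
  let ?D = "degree G"
  have "ap G b l = (\<Sum>i\<le>?D. coeff G i * b (l + int (?D - i)))"
    unfolding ap_def by (rule sum.cong) (auto simp: sym)
  also have "\<dots> = (\<Sum>i\<le>?D. coeff G (?D - (?D - i)) * b (l + int (?D - i)))"
    by (rule sum.cong) auto
  also have "\<dots> = (\<Sum>i\<le>?D. coeff G (?D - i) * b (l + int i))"
    by (rule sum_rev_atMost[where f="\<lambda>i. coeff G (?D - i) * b (l + int i)"])
  also have "\<dots> = (\<Sum>i\<le>?D. - coeff G i * b (l + int i))"
  proof (rule sum.cong[OF refl])
    fix i assume "i \<in> {..?D}"
    then have "coeff (reflect_poly G) i = coeff G (?D - i)" by (simp add: coeff_reflect_poly)
    then show "coeff G (?D - i) * b (l + int i) = - coeff G i * b (l + int i)" using hrefl by simp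
  qed
  also have "\<dots> = - ap G b l" by (simp add: ap_def sum_negf)
  finally have "2 * ap G b l = 0" by simp
  then show ?thesis using two by simp
qed

lemma necessity:
  fixes C :: "'a::field poly"
  assumes inv: "involution cj" and X: "X \<in> carrier_mat n n" and n: "n = degree C"
    and monic: "coeff C (degree C) = 1" and Xi: "invertible_mat X"
    and eq: "X = mat_star cj X * frobenius_block C"
  shows "coeff C 0 \<noteq> 0 \<and> C = poly_vee cj C \<and>
    (\<exists>b. rec C b \<and> X = toeplitz_mat n b \<and> (\<forall>d. - int n \<le> d \<and> d \<le> int n - 1 \<longrightarrow> b d = cj (b (-1 - d))))"
proof -
  obtain a where a: "X = toeplitz_mat n a" "\<And>d. - int n \<le> d \<Longrightarrow> d \<le> int n - 1 \<Longrightarrow> a d = cj (a (-1 - d))"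
    "\<And>l. - int n \<le> l \<Longrightarrow> l \<le> -1 \<Longrightarrow> ap C a l = 0"
    using sol_seq[OF inv X n monic eq] by blast
  have C0: "C \<noteq> 0" using monic by auto
  have c0: "coeff C 0 \<noteq> 0"
  proof
    assume z: "coeff C 0 = 0"
    obtain c V where CV: "C = pCons c V" by (cases C)
    then have c: "c = 0" using z by simp
    have V0: "V \<noteq> 0" using C0 CV c by auto
    have dV: "degree V < n" using n CV V0 by simp
    have "ap V a (- int i) = 0" if "i < n" for i
    proof -
      have "ap C a (- int i - 1) = 0" using a(3)[of "- int i - 1"] that by simp
      then show ?thesis using CV c by (simp add: ap_pCons)
    qed
    then have "\<not> invertible_mat (toeplitz_mat n a)" by (rule toeplitz_singular[OF V0 dV])
    then show False using Xi a(1) by simp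
  qed
  have wr: "ap C a l = 0" if "- int n \<le> l" "l + int (degree C) \<le> int n - 1" for l
    using a(3) that n by simp
  obtain b where b: "rec C b" "\<And>j. - int n \<le> j \<Longrightarrow> j \<le> int n - 1 \<Longrightarrow> b j = a j"
    using extend[OF monic c0, where Q="- int n" and R="int n - 1" and a=a] wr n by auto
  have Xb: "X = toeplitz_mat n b"
    using a(1) b(2) by (auto intro: toeplitz_cong)
  have symb: "b d = cj (b (-1 - d))" if "- int n \<le> d" "d \<le> int n - 1" for d
    using a(2)[OF that] b(2)[OF that] b(2)[of "-1 - d"] that by simp
  define \<psi> where "\<psi> = map_poly cj (reflect_poly C)"
  have cpsi: "coeff \<psi> u = (if u \<le> n then cj (coeff C (n - u)) else 0)" for u
    using n by (auto simp: \<psi>_def coeff_map_cj[OF inv] coeff_reflect_poly cj_0[OF inv])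
  have dpsi: "degree \<psi> \<le> n" by (rule degree_le) (auto simp: cpsi)
  have psi0: "ap \<psi> b l = 0" if l: "- int n \<le> l" "l \<le> -1" for l
  proof -
    have "ap \<psi> b l = (\<Sum>u\<le>n. coeff \<psi> u * b (l + int u))" by (rule ap_bound[OF dpsi])
    also have "\<dots> = (\<Sum>u\<le>n. cj (coeff C (n - u) * b ((-1 - l - int n) + int (n - u))))"
    proof (rule sum.cong[OF refl])
      fix u assume u: "u \<in> {..n}"
      have e1: "-1 - (l + int u) = (-1 - l - int n) + int (n - u)" using u by (simp add: of_nat_diff)
      have "b (l + int u) = cj (b (-1 - (l + int u)))" using symb[of "l + int u"] u l by simp
      then have e2: "b (l + int u) = cj (b ((-1 - l - int n) + int (n - u)))" by (simp only: e1)
      have e3: "coeff \<psi> u = cj (coeff C (n - u))" using u cpsi by simp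
      show "coeff \<psi> u * b (l + int u) = cj (coeff C (n - u) * b ((-1 - l - int n) + int (n - u)))"
        unfolding e2 e3 cj_mult[OF inv] ..
    qed
    also have "\<dots> = cj (\<Sum>u\<le>n. coeff C (n - u) * b ((-1 - l - int n) + int (n - u)))"
      by (simp add: cj_sum[OF inv])
    also have "(\<Sum>u\<le>n. coeff C (n - u) * b ((-1 - l - int n) + int (n - u))) = ap C b (-1 - l - int n)"
      using sum_rev_atMost[where f="\<lambda>i. coeff C i * b ((-1 - l - int n) + int i)" and n=n] n
      by (simp add: ap_def)
    also have "\<dots> = 0" using b(1) by (simp add: rec_def)
    finally show ?thesis by (simp add: cj_0[OF inv])
  qed
  have psiall: "ap \<psi> b j = 0" for j
  proof (rule uniq[OF monic c0 rec_ap[OF b(1)], of "- int n"])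
    fix j assume "- int n \<le> j" "j < - int n + int (degree C)"
    then show "ap \<psi> b j = 0" using psi0 n by simp
  qed
  define f where "f = \<psi> - smult (cj (coeff C 0)) C"
  have fb: "ap f b j = 0" for j using psiall b(1) by (simp add: f_def ap_diff ap_smult rec_def)
  have f0: "f = 0"
  proof (rule ccontr)
    assume fn: "f \<noteq> 0"
    have "degree f \<le> n" unfolding f_def using dpsi n
      by (intro degree_diff_le) (auto simp: degree_smult_le intro: le_trans[OF degree_smult_le])
    moreover have "coeff f n = 0" using cpsi n monic by (simp add: f_def)
    ultimately have "degree f < n" using fn by (metis leading_coeff_0_iff le_neq_implies_less)
    then have "\<not> invertible_mat (toeplitz_mat n b)" using toeplitz_singular[OF fn] fb by blast
    then show False using Xi Xb by simp
  qed
  then have "\<psi> = smult (cj (coeff C 0)) C" by (simp add: f_def)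
  then have "poly_vee cj C = smult (inverse (cj (coeff C 0)) * cj (coeff C 0)) C"
    by (simp add: poly_vee_def \<psi>_def)
  also have "\<dots> = C" using c0 cj_eq0[OF inv, of "coeff C 0"] by simp
  finally show ?thesis using c0 b(1) Xb symb by auto
qed

lemma reflect_lin: "reflect_poly [:a, 1:] = [:1, a::'a::field:]"
  by (intro poly_eqI) (auto simp: coeff_reflect_poly coeff_pCons split: nat.split)

lemma deg1_form:
  assumes "degree p = 1" "lead_coeff p = 1"
  shows "p = [:coeff p 0, 1:]"
proof (rule poly_eqI)
  fix i show "coeff p i = coeff [:coeff p 0, 1:] i"
    using assms by (cases i) (auto simp: coeff_pCons coeff_eq_0 split: nat.split)
qed

lemma irr_root:
  fixes p :: "'a::field poly"
  assumes irr: "irreducible p" and pm: "lead_coeff p = 1" and r: "poly p c = 0"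
  shows "p = [:-c, 1:]"
proof -
  have "[:-c, 1:] dvd p" using r by (simp add: poly_eq_0_iff_dvd)
  then obtain q where q: "p = [:-c, 1:] * q" by (elim dvdE)
  have "\<not> is_unit [:-c, 1:]" by (simp add: is_unit_iff_degree)
  then have "is_unit q" using irreducibleD[OF irr q] by blast
  moreover have q0: "q \<noteq> 0" using \<open>is_unit q\<close> by auto
  ultimately have dq: "degree q = 0" by (simp add: is_unit_iff_degree)
  have "lead_coeff p = lead_coeff [:-c, 1:] * lead_coeff q" unfolding q by (rule lead_coeff_mult)
  then have "lead_coeff p = lead_coeff q" by simp
  then have "q = [:1:]" using dq pm by (metis degree_0_id lead_coeff_pCons(1) pCons_0_0 coeff_0)
  then show ?thesis using q by simp
qed

lemma ap_lin: "ap [:a, 1:] g l = a * g l + g (l + 1)"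
  by (simp add: ap_pCons)

lemma A2_nec:
  fixes C p :: "'a::field poly"
  assumes two: "(2::'a) \<noteq> 0" and chi: "C = p ^ s" and s: "s \<ge> 1" and n: "n = degree C"
    and p: "p = [:(-1) ^ (n - 1), 1:]" and r: "rec C b"
    and sym: "\<And>d. - int n \<le> d \<Longrightarrow> d \<le> int n - 1 \<Longrightarrow> b d = b (-1 - d)"
    and Xi: "invertible_mat (toeplitz_mat n b)"
  shows False
proof -
  define c :: 'a where "c = (-1) ^ (n - 1)"
  have c0: "c \<noteq> 0" by (simp add: c_def)
  have dp: "degree p = 1" using p by simp
  have pc: "p = [:c, 1:]" using p by (simp add: c_def)
  have p0: "p \<noteq> 0" using p by simp
  have ns: "n = s" using chi n dp p0 by (simp add: degree_power_eq)
  have n1: "n \<ge> 1" using ns s by simp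
  define g where "g = ap (p ^ (n - 1)) b"
  have pp: "p * p ^ (n - 1) = C" using chi ns n1 by (simp add: power_eq_if[of p s])
  have recp: "rec p g" unfolding rec_def
  proof
    fix l
    have "ap p g l = ap (p * p ^ (n - 1)) b l" by (simp add: g_def ap_mult)
    then show "ap p g l = 0" using pp r by (simp add: rec_def)
  qed
  have pm: "coeff p (degree p) = 1" "coeff p 0 \<noteq> 0" using p dp c0 by (simp_all add: c_def)
  obtain l0 where l0: "g l0 = 0"
  proof (cases "even n")
    case True
    define G where "G = p ^ (n - 1)"
    define l where "l = - int (n div 2)"
    have cm: "c = -1" using True n1 by (simp add: c_def)
    have "reflect_poly p = - p" using pc cm by (simp add: reflect_lin)
    then have "reflect_poly G = (- p) ^ (n - 1)" by (simp add: G_def reflect_poly_power)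
    also have "\<dots> = - G" using True n1 by (simp add: G_def power_minus' )
    finally have rG: "reflect_poly G = - G" .
    have dG: "degree G = n - 1" using dp p0 by (simp add: G_def degree_power_eq)
    have "ap G b l = 0"
    proof (rule antipal[OF two rG])
      fix i assume "i \<le> degree G"
      then have i: "i \<le> n - 1" using dG by simp
      have "b (l + int i) = b (-1 - (l + int i))" using sym[of "l + int i"] i True n1 by (auto simp: l_def)
      moreover have "-1 - (l + int i) = l + int (degree G - i)" using i dG True n1
        by (auto simp: l_def of_nat_diff elim!: evenE)
      ultimately show "b (l + int i) = b (l + int (degree G - i))" by simp
    qed
    then show ?thesis using that by (simp add: g_def G_def)
  next
    case False
    define G where "G = [:-1, 1:] * p ^ (n - 1)"
    define l where "l = - int ((n + 1) div 2)"
    have cm: "c = 1" using False by (simp add: c_def)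
    have rp: "reflect_poly p = p" using pc cm by (simp add: reflect_lin)
    have r1: "reflect_poly [:-1, 1::'a:] = - [:-1, 1:]" by (simp add: reflect_lin)
    have "reflect_poly G = reflect_poly [:-1, 1:] * reflect_poly (p ^ (n - 1))"
      unfolding G_def by (rule reflect_poly_mult)
    also have "\<dots> = - [:-1, 1:] * p ^ (n - 1)" unfolding r1 reflect_poly_power rp ..
    finally have rG: "reflect_poly G = - G" by (simp add: G_def)
    have "degree G = degree [:-1, 1::'a:] + degree (p ^ (n - 1))"
      unfolding G_def by (rule degree_mult_eq) (use p0 in auto)
    then have dG: "degree G = n" using dp n1 p0 by (simp add: degree_power_eq)
    have "ap G b l = 0"
    proof (rule antipal[OF two rG])
      fix i assume "i \<le> degree G"
      then have i: "i \<le> n" using dG by simp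
      have "b (l + int i) = b (-1 - (l + int i))" using sym[of "l + int i"] i False n1 by (auto simp: l_def elim!: oddE)
      moreover have "-1 - (l + int i) = l + int (degree G - i)" using i dG False
        by (auto simp: l_def of_nat_diff elim!: oddE)
      ultimately show "b (l + int i) = b (l + int (degree G - i))" by simp
    qed
    moreover have "ap G b l = - g l + g (l + 1)"
    proof -
      have "ap G b l = ap [:-1, 1:] (ap (p ^ (n - 1)) b) l" unfolding G_def by (rule ap_mult)
      also have "\<dots> = ap [:-1, 1:] g l" by (simp only: g_def)
      also have "\<dots> = - g l + g (l + 1)" by (simp only: ap_lin) simp
      finally show ?thesis .
    qed
    moreover have "g l + g (l + 1) = 0" using recp ap_lin[of 1 g l] p cm by (simp add: rec_def c_def)
    ultimately have "2 * g l = 0" by (simp add: algebra_simps)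
    then show ?thesis using that two by simp
  qed
  have gall: "g j = 0" for j
  proof (rule uniq[OF pm recp, of l0])
    fix j assume "l0 \<le> j" "j < l0 + int (degree p)"
    then show "g j = 0" using l0 dp by simp
  qed
  have "p ^ (n - 1) \<noteq> 0" using p by simp
  moreover have "degree (p ^ (n - 1)) < n" using dp n1 p0 by (simp add: degree_power_eq)
  ultimately have "\<not> invertible_mat (toeplitz_mat n b)"
    using toeplitz_singular gall by (metis g_def)
  then show False using Xi by simp
qed

lemma frag_nz:
  fixes p :: "'a::field poly"
  assumes pm: "lead_coeff p = 1" and d: "degree p \<ge> 1" and n: "n = s * degree p" and s: "s \<ge> 1"
    and m: "m = (n + 1) div 2"
    and f1: "b (- int m) = cj a0" and f2: "b (int m - 1) = a0"
    and f3: "\<And>j. - int m < j \<Longrightarrow> j < int m - 1 \<Longrightarrow> b j = 0"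
    and a0: "a0 \<noteq> 0"
    and ev: "even n \<Longrightarrow> degree p = 1 \<Longrightarrow> coeff p 0 ^ (n - 1) * cj a0 + a0 \<noteq> 0"
  shows "\<exists>l. ap (p ^ (s - 1)) b l \<noteq> 0"
proof -
  define h where "h = p ^ (s - 1)"
  have p0: "p \<noteq> 0" using pm by auto
  have hm: "coeff h (degree h) = 1" using pm by (simp add: h_def lead_coeff_power)
  have dh: "degree h = n - degree p" using p0 n s by (simp add: h_def degree_power_eq diff_mult_distrib)
  show ?thesis
  proof (cases "even n \<and> degree p = 1")
    case False
    define l where "l = int m - 1 - int (n - degree p)"
    have le: "n - degree p \<le> n" by simp
    have mm: "2 * m + degree p \<ge> n + 2" using False m d by (auto elim!: evenE oddE)
    have "(\<Sum>i<degree h. coeff h i * b (l + int i)) = 0"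
    proof (intro sum.neutral ballI)
      fix i assume "i \<in> {..<degree h}"
      then have i: "i < n - degree p" using dh by simp
      have dle: "degree p \<le> n" using n s by simp
      have e: "int (n - degree p) = int n - int (degree p)" using dle by (simp add: of_nat_diff)
      have "int n + 2 \<le> 2 * int m + int (degree p)" using mm by linarith
      moreover have "int i < int n - int (degree p)" using i dle by linarith
      ultimately show "coeff h i * b (l + int i) = 0" using f3[of "l + int i"] unfolding l_def e by simp
    qed
    moreover have "l + int (degree h) = int m - 1" using dh n s d by (simp add: l_def)
    ultimately have "ap h b l = a0" using ap_monic[OF hm, of b l] f2 by simp
    then show ?thesis using a0 by (auto simp: h_def)
  next
    case True
    then have ns: "n = s" using n by simp
    have n2: "n \<ge> 2" using True s ns by (auto elim!: evenE)
    have m2: "n = 2 * m" using True m by (auto elim!: evenE)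
    have dh': "degree h = n - 1" using dh True by simp
    have "(\<Sum>i<degree h. coeff h i * b (- int m + int i)) =
        coeff h 0 * b (- int m) + (\<Sum>i\<in>{Suc 0..<degree h}. coeff h i * b (- int m + int i))"
      using dh' n2 by (simp add: lessThan_atLeast0 sum.atLeast_Suc_lessThan)
    also have "(\<Sum>i\<in>{Suc 0..<degree h}. coeff h i * b (- int m + int i)) = 0"
    proof (intro sum.neutral ballI)
      fix i assume "i \<in> {Suc 0..<degree h}"
      then have "- int m < - int m + int i" "- int m + int i < int m - 1" using dh' m2 by auto
      then show "coeff h i * b (- int m + int i) = 0" using f3 by simp
    qed
    finally have sm: "(\<Sum>i<degree h. coeff h i * b (- int m + int i)) = coeff p 0 ^ (n - 1) * cj a0"
      using f1 ns by (simp add: h_def coeff_0_power)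
    have "- int m + int (degree h) = int m - 1" using dh' m2 n2 by (simp add: of_nat_diff)
    then have "ap h b (- int m) = coeff p 0 ^ (n - 1) * cj a0 + a0"
      using ap_monic[OF hm, of b "- int m"] sm f2 by simp
    then have "ap (p ^ (s - 1)) b (- int m) \<noteq> 0" using ev True by (simp add: h_def)
    then show ?thesis by blast
  qed
qed

lemma vee_eval:
  fixes chi :: "'a::field poly"
  assumes inv: "involution cj" and A1: "chi = poly_vee cj chi" and c0: "coeff chi 0 \<noteq> 0"
    and odd: "odd (degree chi)"
  shows "coeff chi 0 * cj (poly chi (-1)) + poly chi (-1) = 0"
proof -
  define P where "P = poly chi (-1)"
  define c where "c = coeff chi 0"
  have "P = poly (poly_vee cj chi) (-1)" using A1 by (simp add: P_def)
  also have "\<dots> = inverse (cj c) * poly (map_poly cj (reflect_poly chi)) (cj (-1))"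
    by (simp add: poly_vee_def c_def cj_minus1[OF inv])
  also have "\<dots> = inverse (cj c) * cj (poly (reflect_poly chi) (-1))"
    by (simp add: poly_map_cj[OF inv])
  also have "poly (reflect_poly chi) (-1) = - P"
    using odd by (simp add: poly_reflect_poly_nz P_def)
  finally have "P = inverse (cj c) * cj (- P)" .
  moreover have "cj c \<noteq> 0" using c0 cj_eq0[OF inv] by (simp add: c_def)
  ultimately have "cj c * P = - cj P" by (simp add: cj_neg[OF inv] field_simps)
  then have "cj (cj c * P) = cj (- cj P)" by simp
  then have "c * cj P = - P" by (simp add: cj_mult[OF inv] cj_neg[OF inv] cj_cj[OF inv])
  then show ?thesis by (simp add: P_def c_def)
qed

lemma alpha_sq:
  fixes chi p :: "'a::field poly"
  assumes A1: "chi = poly_vee id chi" and pm: "lead_coeff p = 1" and dp: "degree p = 1"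
    and chi: "chi = p ^ s" and s: "s \<ge> 1"
  shows "coeff p 0 ^ 2 = 1"
proof -
  define \<alpha> where "\<alpha> = coeff p 0"
  have pf: "p = [:\<alpha>, 1:]" using deg1_form[OF dp pm] by (simp add: \<alpha>_def)
  have c0: "coeff chi 0 = \<alpha> ^ s" using chi pf by (simp add: coeff_0_power)
  have chi0: "chi \<noteq> 0" using chi pf by simp
  have cz: "coeff chi 0 \<noteq> 0"
  proof
    assume "coeff chi 0 = 0"
    then have "poly_vee id chi = 0" by (simp add: poly_vee_def)
    then show False using A1 chi0 by simp
  qed
  then have a0: "\<alpha> \<noteq> 0" using c0 s by auto
  have r: "poly chi (- \<alpha>) = 0" using chi pf s by (simp add: power_0_left)
  have "poly chi (- \<alpha>) = poly (poly_vee id chi) (- \<alpha>)" using A1 by simp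
  also have "\<dots> = inverse (coeff chi 0) * ((- \<alpha>) ^ degree chi * poly chi (inverse (- \<alpha>)))"
    using a0 by (simp add: poly_vee_def poly_reflect_poly_nz map_poly_idI)
  finally have "poly chi (inverse (- \<alpha>)) = 0" using r cz a0 by simp
  then have "poly p (inverse (- \<alpha>)) = 0" using chi by simp
  then have "inverse (- \<alpha>) + \<alpha> = 0" using pf by simp
  then have "\<alpha> * \<alpha> = 1" using a0 by (simp add: field_simps)
  then show ?thesis by (simp add: \<alpha>_def power2_eq_square)
qed

lemma sufficiency:
  fixes cj :: "'a::field \<Rightarrow> 'a" and chi p :: "'a poly" and s n :: nat
  assumes char: "(2::'a) \<noteq> 0" and inv: "involution cj"
    and p_irr: "irreducible p" and p_monic: "lead_coeff p = 1" and s_pos: "s \<ge> 1"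
    and chi_def: "chi = p ^ s" and n_def: "n = degree chi"
    and A1: "chi = poly_vee cj chi" and A2: "cj = id \<longrightarrow> p \<noteq> [:(-1) ^ (n - 1), 1:]"
    and kk: "cj \<noteq> id \<longrightarrow> k = - cj k \<and> k \<noteq> 0"
    and m_def: "m = (n + 1) div 2" and a0_def: "a0 = frag_param chi p n k"
    and q_def: "q = min (- int m) (1 - int n)" and r_def: "r = int n - 1"
  shows "(\<exists>a. has_fragment cj m a0 a \<and> recurrent chi q r a) \<and>
    (\<forall>a. has_fragment cj m a0 a \<and> recurrent chi q r a \<longrightarrow>
       toeplitz_mat n a \<in> carrier_mat n n \<and> invertible_mat (toeplitz_mat n a) \<and>
       toeplitz_mat n a = mat_star cj (toeplitz_mat n a) * frobenius_block chi)"
proof -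
  have p0: "p \<noteq> 0" using p_monic by auto
  have dp: "degree p \<ge> 1"
  proof (rule ccontr)
    assume "\<not> degree p \<ge> 1"
    then have "degree p = 0" by simp
    then have "p = [:1:]" using p_monic by (metis degree_0_id)
    then have "p = 1" by (simp add: one_pCons)
    then show False using p_irr by (simp add: irreducible_def)
  qed
  have monic: "coeff chi (degree chi) = 1" using p_monic chi_def by (simp add: lead_coeff_power)
  have ndeg: "n = s * degree p" using chi_def n_def p0 by (simp add: degree_power_eq)
  have n1: "n \<ge> 1" using ndeg dp s_pos by simp
  have chi0: "chi \<noteq> 0" using monic by auto
  have c0: "coeff chi 0 \<noteq> 0" by (rule vee_c0[OF inv A1 chi0])
  have m1: "m \<ge> 1" using m_def n1 by simp
  have mn: "n = 2 * m \<or> n + 1 = 2 * m" using m_def by presburger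
  define \<alpha> where "\<alpha> = coeff p 0"
  have aa: "a0 \<noteq> 0 \<and> (even n \<longrightarrow> degree p = 1 \<longrightarrow> \<alpha> ^ (n - 1) * cj a0 + a0 \<noteq> 0)
      \<and> (odd n \<longrightarrow> coeff chi 0 * cj a0 + a0 = 0)"
  proof (cases "even n")
    case True
    show ?thesis
    proof (cases "degree p = 1 \<and> \<alpha> ^ (n - 1) = -1")
      case T2: True
      then have a0k: "a0 = k" using True by (simp add: a0_def frag_param_def \<alpha>_def)
      have "cj \<noteq> id"
      proof
        assume cid: "cj = id"
        then have "\<alpha> ^ 2 = 1" using alpha_sq[of chi p s] A1 p_monic T2 chi_def s_pos by (simp add: \<alpha>_def)
        moreover obtain t0 where t0: "n = 2 * t0" using True by (elim evenE)
        then have t: "n - 1 = Suc (2 * (t0 - 1))" using n1 by (cases t0) auto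
        ultimately have "\<alpha> ^ (n - 1) = \<alpha>" by (simp add: power_mult)
        then have "\<alpha> = -1" using T2 by simp
        moreover have "p = [:\<alpha>, 1:]" using deg1_form[of p] T2 p_monic by (simp add: \<alpha>_def)
        moreover have "(-1::'a) ^ (n - 1) = -1" using t by simp
        ultimately show False using A2 cid by simp
      qed
      then have k: "k = - cj k" "k \<noteq> 0" using kk by auto
      have "\<alpha> ^ (n - 1) * cj a0 + a0 = 2 * k" using T2 a0k k(1) by simp
      then show ?thesis using a0k k char True by simp
    next
      case F2: False
      then have a01: "a0 = 1" using True by (auto simp: a0_def frag_param_def \<alpha>_def)
      have "\<alpha> ^ (n - 1) * cj a0 + a0 \<noteq> 0" if "degree p = 1"
      proof
        assume "\<alpha> ^ (n - 1) * cj a0 + a0 = 0"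
        then have "\<alpha> ^ (n - 1) = -1" using a01 cj_1[OF inv] by (simp add: eq_neg_iff_add_eq_0)
        then show False using F2 that by simp
      qed
      then show ?thesis using a01 True by simp
    qed
  next
    case False
    show ?thesis
    proof (cases "p = [:1, 1:]")
      case T2: True
      then have a0k: "a0 = k" using False by (simp add: a0_def frag_param_def)
      have "cj \<noteq> id"
      proof
        assume "cj = id"
        moreover have "(-1::'a) ^ (n - 1) = 1" using False n1 by (simp add: neg_one_even_power)
        ultimately show False using A2 T2 by simp
      qed
      then have k: "k = - cj k" "k \<noteq> 0" using kk by auto
      have "coeff chi 0 = 1" using chi_def T2 by (simp add: coeff_0_power)
      then have "coeff chi 0 * cj a0 + a0 = 0" using a0k k(1) by (metis add.commute add_eq_0_iff mult_1)
      then show ?thesis using a0k k False by simp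
    next
      case F2: False
      then have a0p: "a0 = poly chi (-1)" using False by (simp add: a0_def frag_param_def)
      have "poly p (-1) \<noteq> 0"
      proof
        assume "poly p (-1) = 0"
        then have "p = [:- (-1), 1:]" by (rule irr_root[OF p_irr p_monic])
        then show False using F2 by simp
      qed
      then have "a0 \<noteq> 0" using a0p chi_def by simp
      moreover have "coeff chi 0 * cj a0 + a0 = 0"
        using vee_eval[OF inv A1 c0] False n_def a0p by simp
      ultimately show ?thesis using False by simp
    qed
  qed
  have good: "toeplitz_mat n b \<in> carrier_mat n n \<and> invertible_mat (toeplitz_mat n b) \<and>
       toeplitz_mat n b = mat_star cj (toeplitz_mat n b) * frobenius_block chi"
    if rb: "rec chi b" and f1: "b (- int m) = cj a0" and f2: "b (int m - 1) = a0"
      and f3: "\<And>j. - int m < j \<Longrightarrow> j < int m - 1 \<Longrightarrow> b j = 0" for b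
  proof -
    have "b j = cj (b (-1 - j))" for j
    proof -
      have "(\<lambda>d. cj (b (-1 - d)) - b d) j = 0"
      proof (rule uniq[OF monic c0, of _ "- int m"])
        show "rec chi (\<lambda>d. cj (b (-1 - d)) - b d)"
          using tau_rec[OF inv A1 c0 rb] rb by (simp add: rec_def ap_seq_diff)
      next
        fix j assume j: "- int m \<le> j" "j < - int m + int (degree chi)"
        then have j2: "j \<le> int m - 1" using mn n_def by auto
        consider "j = - int m" | "j = int m - 1" | "- int m < j" "j < int m - 1" using j j2 by linarith
        then show "cj (b (-1 - j)) - b j = 0"
        proof cases
          case 1
          then have "-1 - j = int m - 1" by simp
          then show ?thesis using 1 f1 f2 by simp
        next
          case 2
          then have "-1 - j = - int m" by simp
          then show ?thesis using 2 f1 f2 cj_cj[OF inv] by simp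
        next
          case 3
          then show ?thesis using f3[of j] f3[of "-1 - j"] cj_0[OF inv] by simp
        qed
      qed
      then show ?thesis by simp
    qed
    then have eq: "toeplitz_mat n b = mat_star cj (toeplitz_mat n b) * frobenius_block chi"
      by (intro toep_solves[OF inv monic n_def rb]) blast
    have nz: "\<exists>l. ap (p ^ (s - 1)) b l \<noteq> 0"
      by (rule frag_nz[where cj=cj and b=b, OF p_monic dp ndeg s_pos m_def f1 f2 f3]) (use aa \<alpha>_def in auto)
    then obtain l where "ap (p ^ (s - 1)) b l \<noteq> 0" by blast
    then have "invertible_mat (toeplitz_mat (degree chi) b)"
      by (rule inv_crit[OF p_irr p_monic chi_def c0 rb])
    then show ?thesis using eq n_def by simp
  qed
  define w where "w j = (if j = - int m then cj a0 else if j = int m - 1 then a0 else 0)" for j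
  obtain b where b: "rec chi b" "\<And>j. - int m \<le> j \<Longrightarrow> j < - int m + int (degree chi) \<Longrightarrow> b j = w j"
    using build[OF monic c0, of "- int m" w] by blast
  have bf1: "b (- int m) = cj a0" using b(2)[of "- int m"] n1 n_def by (simp add: w_def)
  have bf3: "b j = 0" if "- int m < j" "j < int m - 1" for j
    using b(2)[of j] that mn n_def by (auto simp: w_def)
  have bf2: "b (int m - 1) = a0"
  proof (cases "n = 2 * m")
    case True
    then show ?thesis using b(2)[of "int m - 1"] m1 n_def by (simp add: w_def)
  next
    case False
    then have n2: "n + 1 = 2 * m" using mn by simp
    then have on: "odd n" by presburger
    have "ap chi b (- int m) = 0" using b(1) by (simp add: rec_def)
    moreover have "(\<Sum>i<degree chi. coeff chi i * b (- int m + int i)) = coeff chi 0 * cj a0"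
    proof -
      have "(\<Sum>i<degree chi. coeff chi i * b (- int m + int i)) =
          coeff chi 0 * b (- int m) + (\<Sum>i\<in>{Suc 0..<degree chi}. coeff chi i * b (- int m + int i))"
        using n1 n_def by (simp add: lessThan_atLeast0 sum.atLeast_Suc_lessThan)
      also have "(\<Sum>i\<in>{Suc 0..<degree chi}. coeff chi i * b (- int m + int i)) = 0"
      proof (intro sum.neutral ballI)
        fix i assume "i \<in> {Suc 0..<degree chi}"
        then have "- int m < - int m + int i" "- int m + int i < int m - 1" using n2 n_def by auto
        then show "coeff chi i * b (- int m + int i) = 0" using bf3 by simp
      qed
      finally show ?thesis using bf1 by simp
    qed
    moreover have "- int m + int (degree chi) = int m - 1" using n2 n_def by simp
    ultimately have "coeff chi 0 * cj a0 + b (int m - 1) = 0"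
      using ap_monic[OF monic, of b "- int m"] by simp
    moreover have "coeff chi 0 * cj a0 + a0 = 0" using aa on by simp
    ultimately show ?thesis by (metis add_left_cancel)
  qed
  have ex: "has_fragment cj m a0 b \<and> recurrent chi q r b"
    using bf1 bf2 bf3 b(1) by (auto simp: has_fragment_def recurrent_def rec_def ap_def)
  have all: "toeplitz_mat n a \<in> carrier_mat n n \<and> invertible_mat (toeplitz_mat n a) \<and>
       toeplitz_mat n a = mat_star cj (toeplitz_mat n a) * frobenius_block chi"
    if ha: "has_fragment cj m a0 a" "recurrent chi q r a" for a
  proof -
    have q0: "q \<le> 0" "q \<le> - int m" "q \<le> 1 - int n" using q_def m1 by auto
    have wr: "ap chi a l = 0" if "q \<le> l" "l + int (degree chi) \<le> r" for l
      using ha(2) that by (auto simp: recurrent_def ap_def)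
    obtain b where b: "rec chi b" "\<And>j. q \<le> j \<Longrightarrow> j \<le> r \<Longrightarrow> b j = a j"
      using extend[OF monic c0, where Q=q and R=r and a=a] wr q0 r_def n_def by auto
    have mr: "int m - 1 \<le> r" using r_def mn by auto
    have "b (- int m) = cj a0" "b (int m - 1) = a0"
      using ha(1) b(2) q0 mr m1 by (auto simp: has_fragment_def)
    moreover have "b j = 0" if "- int m < j" "j < int m - 1" for j
      using ha(1) b(2)[of j] that q0 mr by (auto simp: has_fragment_def)
    ultimately have G: "toeplitz_mat n b \<in> carrier_mat n n \<and> invertible_mat (toeplitz_mat n b) \<and>
       toeplitz_mat n b = mat_star cj (toeplitz_mat n b) * frobenius_block chi"
      using good[OF b(1)] by blast
    have "toeplitz_mat n a = toeplitz_mat n b"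
      by (rule toeplitz_cong) (use b(2) q0 r_def in auto)
    then show ?thesis using G by simp
  qed
  show ?thesis using ex all by blast
qed

theorem theorem7:
  fixes cj :: "'a::field \<Rightarrow> 'a" and chi p :: "'a poly" and s n :: nat and Phi :: "'a mat"
  assumes char: "(2::'a) \<noteq> 0"
    and inv: "involution cj"
    and p_irr: "irreducible p" and p_monic: "lead_coeff p = 1"
    and s_pos: "s \<ge> 1"
    and chi_def: "chi = p ^ s"
    and n_def: "n = degree chi"
    and Phi_def: "Phi = frobenius_block chi"
  shows
    "((\<exists>X \<in> carrier_mat n n. invertible_mat X \<and> X = mat_star cj X * Phi) \<longleftrightarrow>
        (chi = poly_vee cj chi \<and> (cj = id \<longrightarrow> p \<noteq> [:(-1) ^ (n - 1), 1:])))
     \<and>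
     ((chi = poly_vee cj chi \<and> (cj = id \<longrightarrow> p \<noteq> [:(-1) ^ (n - 1), 1:])) \<longrightarrow>
        (\<forall>k. (cj \<noteq> id \<longrightarrow> k = - cj k \<and> k \<noteq> 0) \<longrightarrow>
           (let m = (n + 1) div 2; a0 = frag_param chi p n k;
                q = min (- int m) (1 - int n); r = int n - 1
            in (\<exists>a. has_fragment cj m a0 a \<and> recurrent chi q r a) \<and>
               (\<forall>a. has_fragment cj m a0 a \<and> recurrent chi q r a \<longrightarrow>
                   (let X = toeplitz_mat n a in
                      X \<in> carrier_mat n n \<and> invertible_mat X \<and> X = mat_star cj X * Phi)))))"
proof -
  have monic: "coeff chi (degree chi) = 1" using p_monic chi_def by (simp add: lead_coeff_power)
  have suff: "(\<exists>a. has_fragment cj ((n + 1) div 2) (frag_param chi p n k) a \<and>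
        recurrent chi (min (- int ((n + 1) div 2)) (1 - int n)) (int n - 1) a) \<and>
    (\<forall>a. has_fragment cj ((n + 1) div 2) (frag_param chi p n k) a \<and>
        recurrent chi (min (- int ((n + 1) div 2)) (1 - int n)) (int n - 1) a \<longrightarrow>
       toeplitz_mat n a \<in> carrier_mat n n \<and> invertible_mat (toeplitz_mat n a) \<and>
       toeplitz_mat n a = mat_star cj (toeplitz_mat n a) * frobenius_block chi)"
    if A1: "chi = poly_vee cj chi" and A2: "cj = id \<longrightarrow> p \<noteq> [:(-1) ^ (n - 1), 1:]"
      and kk: "cj \<noteq> id \<longrightarrow> k = - cj k \<and> k \<noteq> 0" for k
    by (rule sufficiency[OF char inv p_irr p_monic s_pos chi_def n_def A1 A2 kk refl refl refl refl])
  have part2: "(chi = poly_vee cj chi \<and> (cj = id \<longrightarrow> p \<noteq> [:(-1) ^ (n - 1), 1:])) \<longrightarrow>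
        (\<forall>k. (cj \<noteq> id \<longrightarrow> k = - cj k \<and> k \<noteq> 0) \<longrightarrow>
           (let m = (n + 1) div 2; a0 = frag_param chi p n k;
                q = min (- int m) (1 - int n); r = int n - 1
            in (\<exists>a. has_fragment cj m a0 a \<and> recurrent chi q r a) \<and>
               (\<forall>a. has_fragment cj m a0 a \<and> recurrent chi q r a \<longrightarrow>
                   (let X = toeplitz_mat n a in
                      X \<in> carrier_mat n n \<and> invertible_mat X \<and> X = mat_star cj X * Phi))))"
    using suff unfolding Let_def Phi_def by blast
  have part1: "(\<exists>X \<in> carrier_mat n n. invertible_mat X \<and> X = mat_star cj X * Phi) \<longleftrightarrow>
        (chi = poly_vee cj chi \<and> (cj = id \<longrightarrow> p \<noteq> [:(-1) ^ (n - 1), 1:]))"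
  proof
    assume "\<exists>X \<in> carrier_mat n n. invertible_mat X \<and> X = mat_star cj X * Phi"
    then obtain X where X: "X \<in> carrier_mat n n" "invertible_mat X" "X = mat_star cj X * frobenius_block chi"
      using Phi_def by blast
    from necessity[OF inv X(1) n_def monic X(2) X(3)]
    obtain b where nec: "coeff chi 0 \<noteq> 0" "chi = poly_vee cj chi" "rec chi b" "X = toeplitz_mat n b"
      "\<And>d. - int n \<le> d \<Longrightarrow> d \<le> int n - 1 \<Longrightarrow> b d = cj (b (-1 - d))" by blast
    have "p \<noteq> [:(-1) ^ (n - 1), 1:]" if cid: "cj = id"
    proof
      assume pe: "p = [:(-1) ^ (n - 1), 1:]"
      have sym: "b d = b (-1 - d)" if "- int n \<le> d" "d \<le> int n - 1" for d
        using nec(5)[OF that] cid by simp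
      show False
        by (rule A2_nec[OF char chi_def s_pos n_def pe nec(3) sym]) (use X(2) nec(4) in auto)
    qed
    then show "chi = poly_vee cj chi \<and> (cj = id \<longrightarrow> p \<noteq> [:(-1) ^ (n - 1), 1:])" using nec(2) by blast
  next
    assume A: "chi = poly_vee cj chi \<and> (cj = id \<longrightarrow> p \<noteq> [:(-1) ^ (n - 1), 1:])"
    obtain k where kk: "cj \<noteq> id \<longrightarrow> k = - cj k \<and> k \<noteq> 0"
    proof (cases "cj = id")
      case True then show ?thesis using that by blast
    next
      case False
      then obtain c where c: "cj c \<noteq> c" by (auto simp: fun_eq_iff)
      have "c - cj c = - cj (c - cj c)" by (simp add: cj_diff[OF inv] cj_cj[OF inv])
      moreover have "c - cj c \<noteq> 0" using c by simp
      ultimately show ?thesis using that by blast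
    qed
    from suff[OF A[THEN conjunct1] A[THEN conjunct2] kk]
    obtain a where "has_fragment cj ((n + 1) div 2) (frag_param chi p n k) a \<and>
        recurrent chi (min (- int ((n + 1) div 2)) (1 - int n)) (int n - 1) a"
      "toeplitz_mat n a \<in> carrier_mat n n" "invertible_mat (toeplitz_mat n a)"
      "toeplitz_mat n a = mat_star cj (toeplitz_mat n a) * frobenius_block chi" by blast
    then show "\<exists>X \<in> carrier_mat n n. invertible_mat X \<and> X = mat_star cj X * Phi"
      using Phi_def by blast
  qed
  show ?thesis using part1 part2 by blast
qed

end
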